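(* Let $H$ be a complex Hilbert space and let $\mathcal{U}\subseteq Sob(H)$ be a set of sub-observables all having the same outcome space $(\Omega,\mathcal{F})$, such that: (S1) there exists an observable $Z\in\mathcal{U}$; (S2) if $A\in\mathcal{U}$ then $A'=Z-A\in\mathcal{U}$; (S3) if $A,B\in\mathcal{U}$ and $A+B\in Sob(H)$, then $A+B\in\mathcal{U}$. For $A,B\in\mathcal{U}$ write $A\perp B$ if $A+B\in Sob(H)$, and in that case set $A\oplus B=A+B$. Then $(\mathcal{U},0,Z,\oplus)$ is an effect algebra (here $0$ denotes the zero sub-observable $\Delta\mapsto 0$).
   Context: $\mathcal{L}(H)$ is the set of bounded operators on $H$; $A\le B$ means $\langle\phi,A\phi\rangle\le\langle\phi,B\phi\rangle$ for all $\phi$. An effect is $a\in\mathcal{L}(H)$ with $0\le a\le I$; $\mathcal{E}(H)$ is the set of effects. For a measurable space $(\Omega,\mathcal{F})$, a sub-observable is a map $A:\mathcal{F}\to\mathcal{E}(H)$ that is countably additive in the strong operator topology; it is an observable if moreover $A(\Omega)=I$. $Sob(H)$ denotes the set of sub-observables; sums and differences of sub-observables with the same outcome space are taken pointwise ($(A+B)(\Delta)=A(\Delta)+B(\Delta)$). An effect algebra is a tuple $(E,0,1,\oplus)$ with $\oplus$ a partial binary operation (write $a\perp b$ when $a\oplus b$ is defined) such that: (E1) if $a\perp b$ then $b\perp a$ and $a\oplus b=b\oplus a$; (E2) if $a\perp b$ and $c\perp(a\oplus b)$ then $b\perp c$, $a\perp(b\oplus c)$ and $a\oplus(b\oplus c)=(a\oplus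 b)\oplus c$; (E3) for each $a\in E$ there is a unique $a'\in E$ with $a'\perp a$ and $a\oplus a'=1$; (E4) if $a\perp 1$ then $a=0$. *)

theory Defs
  imports "HOL-Analysis.Analysis" "HOL-Library.Complex_Order" "HOL-Library.Function_Algebras"
begin

class complex_inner = real_normed_vector +
  fixes scaleC :: "complex \<Rightarrow> 'a \<Rightarrow> 'a"
    and cinner :: "'a \<Rightarrow> 'a \<Rightarrow> complex"
  assumes scaleC_add_right: "scaleC c (x + y) = scaleC c x + scaleC c y"
    and scaleC_add_left: "scaleC (c + d) x = scaleC c x + scaleC d x"
    and scaleC_scaleC: "scaleC c (scaleC d x) = scaleC (c * d) x"
    and scaleC_one: "scaleC 1 x = x"
    and scaleR_scaleC: "scaleR r x = scaleC (complex_of_real r) x"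
    and cinner_commute: "cinner x y = cnj (cinner y x)"
    and cinner_add_left: "cinner (x + y) z = cinner x z + cinner y z"
    and cinner_scaleC_left: "cinner (scaleC c x) y = cnj c * cinner x y"
    and cinner_ge_zero: "0 \<le> cinner x x"
    and cinner_eq_zero_iff: "cinner x x = 0 \<longleftrightarrow> x = 0"
    and norm_eq_sqrt_cinner: "norm x = sqrt (Re (cinner x x))"

class chilbert_space = complex_inner + complete_space

definition clinear_op :: "('h::complex_inner \<Rightarrow> 'h) \<Rightarrow> bool" where
  "clinear_op f \<longleftrightarrow> (\<forall>x y. f (x + y) = f x + f y) \<and> (\<forall>c x. f (scaleC c x) = scaleC c (f x))"

definition bounded_op :: "('h::complex_inner \<Rightarrow> 'h) \<Rightarrow> bool" where
  "bounded_op f \<longleftrightarrow> clinear_op f \<and> (\<exists>K. \<forall>x. norm (f x) \<le> norm x * K)"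

text \<open>\<open>A \<le> B\<close> iff \<open>\<langle>\<phi>,A\<phi>\<rangle> \<le> \<langle>\<phi>,B\<phi>\<rangle>\<close> for all \<open>\<phi>\<close> (order on complex numbers from
Complex_Order: real parts compared, imaginary parts equal).\<close>
definition op_le :: "('h::complex_inner \<Rightarrow> 'h) \<Rightarrow> ('h \<Rightarrow> 'h) \<Rightarrow> bool" where
  "op_le A B \<longleftrightarrow> (\<forall>\<phi>. cinner \<phi> (A \<phi>) \<le> cinner \<phi> (B \<phi>))"

definition is_effect :: "('h::complex_inner \<Rightarrow> 'h) \<Rightarrow> bool" where
  "is_effect a \<longleftrightarrow> bounded_op a \<and> op_le (\<lambda>_. 0) a \<and> op_le a id"

text \<open>As a convention
(to make equality of sub-observables meaningful) it is \<open>0\<close> outside \<open>sets M\<close>.\<close>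
definition Sob :: "'w measure \<Rightarrow> ('w set \<Rightarrow> 'h::complex_inner \<Rightarrow> 'h) set" where
  "Sob M = {A. (\<forall>\<Delta>\<in>sets M. is_effect (A \<Delta>))
              \<and> (\<forall>\<Delta>. \<Delta> \<notin> sets M \<longrightarrow> A \<Delta> = 0)
              \<and> (\<forall>D :: nat \<Rightarrow> 'w set. range D \<subseteq> sets M \<longrightarrow> disjoint_family D \<longrightarrow>
                    (\<forall>\<phi>. (\<lambda>n. A (D n) \<phi>) sums (A (\<Union>n. D n) \<phi>)))}"

definition is_observable :: "'w measure \<Rightarrow> ('w set \<Rightarrow> 'h::complex_inner \<Rightarrow> 'h) \<Rightarrow> bool" where
  "is_observable M A \<longleftrightarrow> A \<in> Sob M \<and> A (space M) = id"

text \<open>An effect algebra on carrier \<open>E\<close>; the partial operation is given by the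
orthogonality relation \<open>perp\<close> and a total function \<open>oplus\<close> that is only
meaningful on orthogonal pairs.\<close>
definition effect_algebra ::
  "'a set \<Rightarrow> ('a \<Rightarrow> 'a \<Rightarrow> bool) \<Rightarrow> ('a \<Rightarrow> 'a \<Rightarrow> 'a) \<Rightarrow> 'a \<Rightarrow> 'a \<Rightarrow> bool" where
  "effect_algebra E perp oplus zero one \<longleftrightarrow>
     zero \<in> E \<and> one \<in> E \<and>
     (\<forall>a\<in>E. \<forall>b\<in>E. perp a b \<longrightarrow> oplus a b \<in> E) \<and>
     (\<forall>a\<in>E. \<forall>b\<in>E. perp a b \<longrightarrow> perp b a \<and> oplus a b = oplus b a) \<and>
     (\<forall>a\<in>E. \<forall>b\<in>E. \<forall>c\<in>E. perp a b \<and> perp c (oplus a b) \<longrightarrow>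
        perp b c \<and> perp a (oplus b c) \<and> oplus a (oplus b c) = oplus (oplus a b) c) \<and>
     (\<forall>a\<in>E. \<exists>!a'. a' \<in> E \<and> perp a' a \<and> oplus a a' = one) \<and>
     (\<forall>a\<in>E. perp a one \<longrightarrow> a = zero)"

end

theory Submission
  imports Defs
begin

lemma cinner_add_right': "cinner x (y + z) = cinner x y + cinner x (z::'a::complex_inner)"
  by (metis cinner_commute cinner_add_left complex_cnj_add)

lemma cinner_scaleC_right': "cinner x (scaleC c y) = c * cinner x (y::'a::complex_inner)"
  by (metis cinner_commute cinner_scaleC_left complex_cnj_mult complex_cnj_cnj)

lemma cinner_zero_right': "cinner x (0::'a::complex_inner) = 0"
  using cinner_add_right'[of x 0 0] by simp

lemma bounded_op_add:
  assumes "bounded_op f" "bounded_op g"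
  shows "bounded_op (f + g)"
proof -
  from assms obtain K1 K2 where K1: "\<forall>x. norm (f x) \<le> norm x * K1"
    and K2: "\<forall>x. norm (g x) \<le> norm x * K2" unfolding bounded_op_def by blast
  have "clinear_op (f + g)" using assms
    unfolding bounded_op_def clinear_op_def by (simp add: scaleC_add_right)
  moreover have "\<forall>x. norm ((f + g) x) \<le> norm x * (K1 + K2)"
  proof
    fix x
    have "norm ((f + g) x) \<le> norm (f x) + norm (g x)" by (simp add: norm_triangle_ineq)
    also have "\<dots> \<le> norm x * K1 + norm x * K2" using K1 K2 by (meson add_mono)
    finally show "norm ((f + g) x) \<le> norm x * (K1 + K2)" by (simp add: distrib_left)
  qed
  ultimately show ?thesis unfolding bounded_op_def by blast
qed

lemma sob_sub:
  assumes A: "A \<in> Sob M" and B: "B \<in> Sob M" and C: "C \<in> Sob M"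
    and ABC: "A + (B + C) \<in> Sob M"
  shows "B + C \<in> Sob M"
proof -
  have eff: "is_effect ((B + C) \<Delta>)" if d: "\<Delta> \<in> sets M" for \<Delta>
  proof -
    have eA: "is_effect (A \<Delta>)" and eB: "is_effect (B \<Delta>)" and eC: "is_effect (C \<Delta>)"
      and eABC: "is_effect ((A + (B + C)) \<Delta>)"
      using A B C ABC d unfolding Sob_def by auto
    have bo: "bounded_op ((B + C) \<Delta>)"
    proof -
      have "(B + C) \<Delta> = B \<Delta> + C \<Delta>" by simp
      then show ?thesis using eB eC bounded_op_add unfolding is_effect_def by metis
    qed
    have ge: "op_le (\<lambda>_. 0) ((B + C) \<Delta>)"
      using eB eC unfolding is_effect_def op_le_def
      by (simp add: cinner_add_right' cinner_zero_right' add_nonneg_nonneg)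
    have le: "op_le ((B + C) \<Delta>) id"
      unfolding op_le_def
    proof
      fix \<phi>
      have a0: "0 \<le> cinner \<phi> (A \<Delta> \<phi>)" using eA unfolding is_effect_def op_le_def
        by (metis cinner_zero_right')
      have "cinner \<phi> ((B + C) \<Delta> \<phi>) \<le> cinner \<phi> (A \<Delta> \<phi>) + cinner \<phi> ((B + C) \<Delta> \<phi>)"
        using a0 by simp
      also have "\<dots> = cinner \<phi> ((A + (B + C)) \<Delta> \<phi>)" by (simp add: cinner_add_right')
      also have "\<dots> \<le> cinner \<phi> (id \<phi>)" using eABC unfolding is_effect_def op_le_def by blast
      finally show "cinner \<phi> ((B + C) \<Delta> \<phi>) \<le> cinner \<phi> (id \<phi>)" .
    qed
    show ?thesis using bo ge le unfolding is_effect_def by blast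
  qed
  have out: "(B + C) \<Delta> = 0" if "\<Delta> \<notin> sets M" for \<Delta>
    using B C that unfolding Sob_def by auto
  have sums: "(\<lambda>n. (B + C) (D n) \<phi>) sums ((B + C) (\<Union>n. D n) \<phi>)"
    if "range D \<subseteq> sets M" "disjoint_family D" for D :: "nat \<Rightarrow> _" and \<phi>
  proof -
    have "(\<lambda>n. B (D n) \<phi>) sums (B (\<Union>n. D n) \<phi>)" "(\<lambda>n. C (D n) \<phi>) sums (C (\<Union>n. D n) \<phi>)"
      using B C that unfolding Sob_def by auto
    from sums_add[OF this] show ?thesis by simp
  qed
  show ?thesis unfolding Sob_def using eff out sums by blast
qed

lemma sum_two_nat: "(\<Sum>n\<in>{0,1::nat}. f n) = f 0 + f (Suc 0)"
  by simp

lemma SobD: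
  assumes "A \<in> Sob M"
  shows "\<And>\<Delta>. \<Delta> \<in> sets M \<Longrightarrow> is_effect (A \<Delta>)"
    and "\<And>\<Delta>. \<Delta> \<notin> sets M \<Longrightarrow> A \<Delta> = 0"
    and "\<And>D \<phi>. range D \<subseteq> sets M \<Longrightarrow> disjoint_family D \<Longrightarrow>
           (\<lambda>n. A (D n) \<phi>) sums (A (\<Union>n. D n) \<phi>)"
  using assms unfolding Sob_def by blast+

lemma polarization_zero:
  fixes T :: "'h::complex_inner \<Rightarrow> 'h"
  assumes lin: "clinear_op T" and z: "\<forall>\<phi>. cinner \<phi> (T \<phi>) = 0"
  shows "T = (\<lambda>_. 0)"
proof
  fix y
  have add: "T (x + y) = T x + T y" for x y using lin unfolding clinear_op_def by blast
  have sc: "T (scaleC c x) = scaleC c (T x)" for c x using lin unfolding clinear_op_def by blast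
  have p1: "cinner x (T y) + cinner y (T x) = 0" for x y
  proof -
    have "cinner (x + y) (T (x + y)) = 0" using z by blast
    then show ?thesis using z[rule_format, of x] z[rule_format, of y]
      by (simp add: add cinner_add_left cinner_add_right' add.commute)
  qed
  have p2: "cinner x (T y) - cinner y (T x) = 0" for x y
  proof -
    have h: "cinner x (T (scaleC \<i> y)) + cinner (scaleC \<i> y) (T x) = 0" by (rule p1)
    have h1: "cinner x (T (scaleC \<i> y)) = \<i> * cinner x (T y)"
      by (simp only: sc cinner_scaleC_right')
    have h2: "cinner (scaleC \<i> y) (T x) = - \<i> * cinner y (T x)"
      by (simp only: cinner_scaleC_left complex_cnj_i)
    have "\<i> * (cinner x (T y) - cinner y (T x)) = 0"
      using h unfolding h1 h2 by (simp add: right_diff_distrib)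
    then show ?thesis by simp
  qed
  have "cinner x (T y) = 0" for x
  proof -
    have "2 * cinner x (T y) = (cinner x (T y) + cinner y (T x)) + (cinner x (T y) - cinner y (T x))"
      by simp
    also have "\<dots> = 0" using p1[of x y] p2[of x y] by simp
    finally show ?thesis by simp
  qed
  then have "cinner (T y) (T y) = 0" by blast
  then show "T y = 0" using cinner_eq_zero_iff by blast
qed

theorem theorem3p1:
  fixes M :: "'w measure"
    and U :: "('w set \<Rightarrow> 'h::chilbert_space \<Rightarrow> 'h) set"
    and Z :: "'w set \<Rightarrow> 'h \<Rightarrow> 'h"
  assumes U_Sob: "U \<subseteq> Sob M"
    and S1: "Z \<in> U" "is_observable M Z"
    and S2: "\<forall>A\<in>U. Z - A \<in> U"
    and S3: "\<forall>A\<in>U. \<forall>B\<in>U. A + B \<in> Sob M \<longrightarrow> A + B \<in> U"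
  shows "effect_algebra U (\<lambda>A B. A + B \<in> Sob M) (+) 0 Z"
proof -
  have Z0: "Z - Z = 0" by simp
  have zero: "0 \<in> U" using S2 S1(1) by (metis Z0)
  have assoc: "b + c \<in> Sob M \<and> a + (b + c) \<in> Sob M \<and> a + (b + c) = (a + b) + c"
    if "a \<in> U" "b \<in> U" "c \<in> U" "a + b \<in> Sob M" "c + (a + b) \<in> Sob M" for a b c
  proof -
    have e: "a + (b + c) = c + (a + b)" by (simp add: add_ac)
    have "a + (b + c) \<in> Sob M" using that(5) e by metis
    moreover then have "b + c \<in> Sob M" using sob_sub[of a M b c] that U_Sob by blast
    ultimately show ?thesis by (simp add: add.assoc)
  qed
  have compl: "\<exists>!a'. a' \<in> U \<and> a' + a \<in> Sob M \<and> a + a' = Z" if "a \<in> U" for a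
  proof
    show "Z - a \<in> U \<and> Z - a + a \<in> Sob M \<and> a + (Z - a) = Z"
    proof (intro conjI)
      show "Z - a \<in> U" using that S2 by blast
      show "Z - a + a \<in> Sob M" using S1(1) U_Sob by simp blast
      show "a + (Z - a) = Z" by simp
    qed
  next
    fix a' assume "a' \<in> U \<and> a' + a \<in> Sob M \<and> a + a' = Z"
    then show "a' = Z - a" by (metis add_diff_cancel_left')
  qed
  have e4: "a = 0" if aU: "a \<in> U" and aZ: "a + Z \<in> Sob M" for a
  proof
    fix \<Delta>
    have aS: "a \<in> Sob M" using aU U_Sob by blast
    have Zid: "Z (space M) = id" using S1(2) unfolding is_observable_def by blast
    show "a \<Delta> = 0 \<Delta>"
    proof (cases "\<Delta> \<in> sets M")
      case False
      then show ?thesis using SobD(2)[OF aS] by simp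
    next
      case True
      have sa: "(\<lambda>n. a (D n) \<phi>) sums (a (\<Union>n. D n) \<phi>)"
        if "range D \<subseteq> sets M" "disjoint_family D" for D :: "nat \<Rightarrow> _" and \<phi>
        using SobD(3)[OF aS] that by blast
      have pos: "0 \<le> cinner \<phi> (a E \<phi>)" if "E \<in> sets M" for E \<phi>
        using SobD(1)[OF aS that] unfolding is_effect_def op_le_def
        by (simp add: cinner_zero_right')
      have empty: "a {} \<phi> = 0" for \<phi>
      proof -
        have "(\<lambda>n. a {} \<phi>) sums (a (\<Union>n. {}) \<phi>)"
          using sa[of "\<lambda>n. {}" \<phi>] by (simp add: disjoint_family_on_def)
        then have "summable (\<lambda>n. a {} \<phi>)" by (simp add: sums_summable)
        then have "(\<lambda>n. a {} \<phi>) \<longlonglongrightarrow> 0" by (rule summable_LIMSEQ_zero)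
        then show ?thesis using LIMSEQ_unique tendsto_const by blast
      qed
      have fin: "a (space M) \<phi> = a \<Delta> \<phi> + a (space M - \<Delta>) \<phi>" for \<phi>
      proof -
        have sp2: "space M - \<Delta> \<in> sets M" using True by blast
        have sub: "\<Delta> \<subseteq> space M" using True sets.sets_into_space by blast
        define D :: "nat \<Rightarrow> 'w set" where "D n = (if n = 0 then \<Delta> else if n = 1 then space M - \<Delta> else {})" for n
        have D0: "D 0 = \<Delta>" and D1: "D (Suc 0) = space M - \<Delta>" and D2: "n \<ge> 2 \<Longrightarrow> D n = {}" for n
          unfolding D_def by simp_all
        have Dcases: "n = 0 \<or> n = 1 \<or> n \<ge> 2" for n :: nat by linarith
        have r: "range D \<subseteq> sets M"
        proof
          fix X assume "X \<in> range D"
          then obtain n where "X = D n" by blast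
          then show "X \<in> sets M" using Dcases[of n] D0 D1 D2[of n] True sp2 by auto
        qed
        have dj: "disjoint_family D" unfolding disjoint_family_on_def
        proof (intro ballI impI)
          fix m n :: nat assume "m \<noteq> n"
          then show "D m \<inter> D n = {}" using Dcases[of m] Dcases[of n] D0 D1 D2[of m] D2[of n] by auto
        qed
        have u: "(\<Union>n. D n) = space M"
        proof
          show "(\<Union>n. D n) \<subseteq> space M"
          proof
            fix x assume "x \<in> (\<Union>n. D n)"
            then obtain n where "x \<in> D n" by blast
            then show "x \<in> space M" using Dcases[of n] D0 D1 D2[of n] sub by auto
          qed
          show "space M \<subseteq> (\<Union>n. D n)"
          proof
            fix x assume "x \<in> space M"
            then have "x \<in> D 0 \<or> x \<in> D (Suc 0)" using D0 D1 by blast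
            then show "x \<in> (\<Union>n. D n)" by blast
          qed
        qed
        have s1: "(\<lambda>n. a (D n) \<phi>) sums (a (space M) \<phi>)" using sa[OF r dj, of \<phi>] u by simp
        have z2: "a (D n) \<phi> = 0" if "n \<notin> {0, 1}" for n
        proof -
          have "n \<ge> 2" using that by auto
          then show ?thesis using D2 empty by simp
        qed
        have "(\<lambda>n. a (D n) \<phi>) sums (\<Sum>n\<in>{0,1}. a (D n) \<phi>)"
          by (rule sums_finite) (simp, rule z2)
        from sums_unique2[OF s1 this] have "a (space M) \<phi> = (\<Sum>n\<in>{0,1}. a (D n) \<phi>)" .
        moreover have "(\<Sum>n\<in>{0,1::nat}. a (D n) \<phi>) = a (D 0) \<phi> + a (D (Suc 0)) \<phi>"
          by (rule sum_two_nat)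
        ultimately show ?thesis unfolding D0 D1 by (rule trans)
      qed
      have sp: "space M \<in> sets M" by simp
      have sp2: "space M - \<Delta> \<in> sets M" using True by auto
      have le0: "cinner \<phi> (a (space M) \<phi>) \<le> 0" for \<phi>
      proof -
        have "is_effect ((a + Z) (space M))" using SobD(1)[OF aZ sp] .
        then have "cinner \<phi> ((a + Z) (space M) \<phi>) \<le> cinner \<phi> (id \<phi>)"
          unfolding is_effect_def op_le_def by blast
        then show ?thesis using Zid by (simp add: cinner_add_right')
      qed
      have z: "\<forall>\<phi>. cinner \<phi> (a \<Delta> \<phi>) = 0"
      proof
        fix \<phi>
        have s: "cinner \<phi> (a \<Delta> \<phi>) + cinner \<phi> (a (space M - \<Delta>) \<phi>) \<le> 0"
          using le0[of \<phi>] fin[of \<phi>] by (simp add: cinner_add_right')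
        have y0: "0 \<le> cinner \<phi> (a (space M - \<Delta>) \<phi>)" using pos sp2 by blast
        have x0: "0 \<le> cinner \<phi> (a \<Delta> \<phi>)" using pos True by blast
        have "cinner \<phi> (a \<Delta> \<phi>) \<le> cinner \<phi> (a \<Delta> \<phi>) + cinner \<phi> (a (space M - \<Delta>) \<phi>)"
          using y0 by (rule add_increasing2) simp
        then have "cinner \<phi> (a \<Delta> \<phi>) \<le> 0" using s by (rule order.trans)
        then show "cinner \<phi> (a \<Delta> \<phi>) = 0" using x0 by (rule order.antisym)
      qed
      have "clinear_op (a \<Delta>)" using SobD(1)[OF aS True] unfolding is_effect_def bounded_op_def by blast
      from polarization_zero[OF this z] show ?thesis by (simp add: zero_fun_def)
    qed
  qed
  have comm: "\<forall>a\<in>U. \<forall>b\<in>U. a + b \<in> Sob M \<longrightarrow> b + a \<in> Sob M \<and> a + b = b + a"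
    by (simp add: add.commute)
  show ?thesis unfolding effect_algebra_def
    apply (intro conjI)
    subgoal by (rule zero)
    subgoal by (rule S1(1))
    subgoal using S3 by blast
    subgoal by (rule comm)
    subgoal using assoc by blast
    subgoal using compl by blast
    subgoal using e4 by blast
    done
qed

end
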